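(* Let $L_0$ be a normal modal logic with $\mathbf{T}\subseteq L_0$. Suppose $L_0$ is complete with respect to a class $C$ of Kripke frames or general frames such that for every $\mathcal W\in C$ the frame $2\mathcal W$ is an $L_0$-frame. Then $L_0$ has the strong boxdot property: for every normal modal logic $L$, if $\mathrm{BD}(L)\subseteq L_0$ then $L\subseteq L_0$.
   Context: Modal formulas are built from propositional variables with Boolean connectives and a single modality $\Box$. A normal modal logic (nml) is a set of formulas containing all classical tautologies and $\Box(p\to q)\to(\Box p\to\Box q)$, and closed under modus ponens, necessitation and substitution. $\mathbf K$ is the smallest nml, and $\mathbf T=\mathbf K\oplus(\Box p\to p)$. The boxdot translation $\varphi\mapsto\varphi^{\boxdot}$ fixes propositional variables, commutes with Boolean connectives, and satisfies $(\Box\varphi)^{\boxdot}=\boxdot\varphi^{\boxdot}$, where $\boxdot\psi$ abbreviates $\psi\wedge\Box\psi$. For an nml $L$, let $\mathrm{BD}(L)=\{\varphi:\varphi^{\boxdot}\in L\}$. A general frame is a triple $\langle W,R,A\rangle$ where $R\subseteq W\times W$ and $A\subseteq\mathcal P(W)$ is closed under Boolean operations and under $\Box X=\{w:\forall v\,(wRv\Rightarrow v\in X)\}$. Models based on it are those in which every variable denotes a set in $A$. A formula is valid in the frame if it holds at every point of every model based on the frame. A Kripke frame $\langle W,R\rangle$ is identified with $\langle W,R,\mathcal P(W)\rangle$. A frame is an $L$-frame if all formulas of $L$ are valid in it. $L$ is complete with respect to $C$ if every $\varphi\notin L$ is invalid in some frame of $C$. For a Kripke frame $\mathcal W=\langle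 W,R\rangle$, the frame $2\mathcal W=\langle 2W,2R\rangle$ is defined by $2W=W\times\{0,1\}$ and $\langle w,a\rangle\,2R\,\langle v,b\rangle$ iff $wRv$. For a general frame $\langle W,R,A\rangle$, $2\mathcal W=\langle 2W,2R,2A\rangle$ with $2A=\{(X\times\{0\})\cup(Y\times\{1\}):X,Y\in A\}$. *)

theory Defs
  imports Main
begin

datatype fm = Var nat | Bot | Imp fm fm | Box fm

definition Neg :: "fm \<Rightarrow> fm" where "Neg a = Imp a Bot"
definition Top :: fm where "Top = Imp Bot Bot"
definition Or :: "fm \<Rightarrow> fm \<Rightarrow> fm" where "Or a b = Imp (Neg a) b"
definition And :: "fm \<Rightarrow> fm \<Rightarrow> fm" where "And a b = Neg (Imp a (Neg b))"

fun peval :: "(fm \<Rightarrow> bool) \<Rightarrow> fm \<Rightarrow> bool" where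
  "peval v (Var n) = v (Var n)"
| "peval v Bot = False"
| "peval v (Imp a b) = (peval v a \<longrightarrow> peval v b)"
| "peval v (Box a) = v (Box a)"

definition tautology :: "fm \<Rightarrow> bool" where
  "tautology a \<longleftrightarrow> (\<forall>v. peval v a)"

primrec subst :: "(nat \<Rightarrow> fm) \<Rightarrow> fm \<Rightarrow> fm" where
  "subst s (Var n) = s n"
| "subst s Bot = Bot"
| "subst s (Imp a b) = Imp (subst s a) (subst s b)"
| "subst s (Box a) = Box (subst s a)"

definition axK :: fm where
  "axK = Imp (Box (Imp (Var 0) (Var 1))) (Imp (Box (Var 0)) (Box (Var 1)))"

definition axT :: fm where
  "axT = Imp (Box (Var 0)) (Var 0)"

definition nml :: "fm set \<Rightarrow> bool" where
  "nml L \<longleftrightarrow>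
     (\<forall>a. tautology a \<longrightarrow> a \<in> L) \<and> axK \<in> L \<and>
     (\<forall>a b. a \<in> L \<longrightarrow> Imp a b \<in> L \<longrightarrow> b \<in> L) \<and>
     (\<forall>a. a \<in> L \<longrightarrow> Box a \<in> L) \<and>
     (\<forall>a s. a \<in> L \<longrightarrow> subst s a \<in> L)"

definition logicK :: "fm set" where
  "logicK = \<Inter>{L. nml L}"

definition logicT :: "fm set" where
  "logicT = \<Inter>{L. nml L \<and> axT \<in> L}"

primrec boxdot :: "fm \<Rightarrow> fm" where
  "boxdot (Var n) = Var n"
| "boxdot Bot = Bot"
| "boxdot (Imp a b) = Imp (boxdot a) (boxdot b)"
| "boxdot (Box a) = And (boxdot a) (Box (boxdot a))"

definition BD :: "fm set \<Rightarrow> fm set" where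
  "BD L = {a. boxdot a \<in> L}"

record 'w gframe =
  worlds :: "'w set"
  rel :: "('w \<times> 'w) set"
  adm :: "'w set set"

definition boxset :: "'w gframe \<Rightarrow> 'w set \<Rightarrow> 'w set" where
  "boxset F X = {w \<in> worlds F. \<forall>v. (w, v) \<in> rel F \<longrightarrow> v \<in> X}"

definition gen_frame :: "'w gframe \<Rightarrow> bool" where
  "gen_frame F \<longleftrightarrow>
     rel F \<subseteq> worlds F \<times> worlds F \<and>
     adm F \<subseteq> Pow (worlds F) \<and>
     {} \<in> adm F \<and>
     (\<forall>X\<in>adm F. worlds F - X \<in> adm F) \<and>
     (\<forall>X\<in>adm F. \<forall>Y\<in>adm F. X \<union> Y \<in> adm F) \<and>
     (\<forall>X\<in>adm F. \<forall>Y\<in>adm F. X \<inter> Y \<in> adm F) \<and>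
     (\<forall>X\<in>adm F. boxset F X \<in> adm F)"

definition kripke :: "'w set \<Rightarrow> ('w \<times> 'w) set \<Rightarrow> 'w gframe" where
  "kripke W R = \<lparr>worlds = W, rel = R, adm = Pow W\<rparr>"

fun sat :: "'w gframe \<Rightarrow> (nat \<Rightarrow> 'w set) \<Rightarrow> 'w \<Rightarrow> fm \<Rightarrow> bool" where
  "sat F V w (Var n) = (w \<in> V n)"
| "sat F V w Bot = False"
| "sat F V w (Imp a b) = (sat F V w a \<longrightarrow> sat F V w b)"
| "sat F V w (Box a) = (\<forall>v. (w, v) \<in> rel F \<longrightarrow> sat F V v a)"

definition valid_in :: "'w gframe \<Rightarrow> fm \<Rightarrow> bool" where
  "valid_in F a \<longleftrightarrow>
     (\<forall>V. (\<forall>n. V n \<in> adm F) \<longrightarrow> (\<forall>w\<in>worlds F. sat F V w a))"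

definition L_frame :: "fm set \<Rightarrow> 'w gframe \<Rightarrow> bool" where
  "L_frame L F \<longleftrightarrow> (\<forall>a\<in>L. valid_in F a)"

definition complete_wrt :: "fm set \<Rightarrow> 'w gframe set \<Rightarrow> bool" where
  "complete_wrt L C \<longleftrightarrow> (\<forall>a. a \<notin> L \<longrightarrow> (\<exists>F\<in>C. \<not> valid_in F a))"

section \<open>The doubled frame 2W (0 = False, 1 = True)\<close>

definition double :: "'w gframe \<Rightarrow> ('w \<times> bool) gframe" where
  "double F = \<lparr>worlds = worlds F \<times> UNIV,
               rel = {((w, a), (v, b)). (w, v) \<in> rel F},
               adm = {(X \<times> {False}) \<union> (Y \<times> {True}) | X Y. X \<in> adm F \<and> Y \<in> adm F}\<rparr>"

definition strong_boxdot_property :: "fm set \<Rightarrow> bool" where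
  "strong_boxdot_property L0 \<longleftrightarrow> (\<forall>L. nml L \<longrightarrow> BD L \<subseteq> L0 \<longrightarrow> L \<subseteq> L0)"

end

theory Submission
  imports Defs
begin

definition Iff :: "fm \<Rightarrow> fm \<Rightarrow> fm" where "Iff a b = And (Imp a b) (Imp b a)"

definition cb :: "nat \<Rightarrow> fm \<Rightarrow> fm" where
  "cb n x = And (Imp (Var n) (Box (Imp (Neg (Var n)) x))) (Imp (Neg (Var n)) (Box (Imp (Var n) x)))"

definition hyp :: "nat \<Rightarrow> fm \<Rightarrow> fm" where
  "hyp n x = And (Imp (Var n) (Iff (Box (Imp (Neg (Var n)) x)) (Box (Imp (Var n) x))))
                 (Imp (Neg (Var n)) (Iff (Box (Imp (Var n) x)) (Box (Imp (Neg (Var n)) x))))"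

primrec tu :: "nat \<Rightarrow> fm \<Rightarrow> fm" where
  "tu n (Var m) = Var m"
| "tu n Bot = Bot"
| "tu n (Imp a b) = Imp (tu n a) (tu n b)"
| "tu n (Box a) = cb n (tu n a)"

primrec tg :: "nat \<Rightarrow> fm \<Rightarrow> fm" where
  "tg n (Var m) = Top"
| "tg n Bot = Top"
| "tg n (Imp a b) = And (tg n a) (tg n b)"
| "tg n (Box a) = And (hyp n (tu n a)) (Box (tg n a))"

primrec vars :: "fm \<Rightarrow> nat set" where
  "vars (Var m) = {m}"
| "vars Bot = {}"
| "vars (Imp a b) = vars a \<union> vars b"
| "vars (Box a) = vars a"

lemma finite_vars: "finite (vars a)" by (induction a) auto

lemmas fdefs = Neg_def Top_def Or_def And_def Iff_def

lemma pv[simp]: "peval v (Neg a) = (\<not> peval v a)" "peval v (And a b) = (peval v a \<and> peval v b)"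
  "peval v (Iff a b) = (peval v a \<longleftrightarrow> peval v b)" "peval v Top"
  by (simp_all add: fdefs, blast+)

lemma sv[simp]: "sat F V w (Neg a) = (\<not> sat F V w a)" "sat F V w (And a b) = (sat F V w a \<and> sat F V w b)"
  "sat F V w (Iff a b) = (sat F V w a \<longleftrightarrow> sat F V w b)" "sat F V w Top"
  by (simp_all add: fdefs, blast+)

lemma taut_in: "nml L \<Longrightarrow> tautology a \<Longrightarrow> a \<in> L" unfolding nml_def by blast
lemma mp_in: "nml L \<Longrightarrow> a \<in> L \<Longrightarrow> Imp a b \<in> L \<Longrightarrow> b \<in> L" unfolding nml_def by blast
lemma nec_in: "nml L \<Longrightarrow> a \<in> L \<Longrightarrow> Box a \<in> L" unfolding nml_def by blast

lemma comb1: "nml L \<Longrightarrow> a \<in> L \<Longrightarrow> tautology (Imp a c) \<Longrightarrow> c \<in> L"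
  using taut_in mp_in by blast

lemma and_in: "nml L \<Longrightarrow> a \<in> L \<Longrightarrow> b \<in> L \<Longrightarrow> And a b \<in> L"
proof -
  assume L: "nml L" and a: "a \<in> L" and b: "b \<in> L"
  have "tautology (Imp a (Imp b (And a b)))" by (auto simp: tautology_def)
  then have "Imp a (Imp b (And a b)) \<in> L" using taut_in L by blast
  then show ?thesis using mp_in L a b by blast
qed

lemma K_in: "nml L \<Longrightarrow> Imp (Box (Imp a b)) (Imp (Box a) (Box b)) \<in> L"
proof -
  assume L: "nml L"
  have "subst (\<lambda>k. if k = 0 then a else if k = 1 then b else Var k) axK \<in> L"
    using L axK_def unfolding nml_def by blast
  then show ?thesis by (simp add: axK_def)
qed

lemma mono_in: "nml L \<Longrightarrow> Imp a b \<in> L \<Longrightarrow> Imp (Box a) (Box b) \<in> L"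
  using K_in nec_in mp_in by blast

lemma reg_in: "nml L \<Longrightarrow> Imp a (Imp b c) \<in> L \<Longrightarrow> Imp (Box a) (Imp (Box b) (Box c)) \<in> L"
proof -
  assume L: "nml L" and h: "Imp a (Imp b c) \<in> L"
  have 1: "Imp (Box a) (Box (Imp b c)) \<in> L" using mono_in[OF L h] .
  have 2: "Imp (Box (Imp b c)) (Imp (Box b) (Box c)) \<in> L" using K_in[OF L] .
  have "And (Imp (Box a) (Box (Imp b c))) (Imp (Box (Imp b c)) (Imp (Box b) (Box c))) \<in> L"
    using and_in[OF L 1 2] .
  moreover have "tautology (Imp (And (Imp (Box a) (Box (Imp b c))) (Imp (Box (Imp b c)) (Imp (Box b) (Box c))))
     (Imp (Box a) (Imp (Box b) (Box c))))"
    by (auto simp: tautology_def)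
  ultimately show ?thesis using comb1[OF L] by blast
qed

lemma bd_simps[simp]: "boxdot (Neg a) = Neg (boxdot a)" "boxdot (And a b) = And (boxdot a) (boxdot b)"
  "boxdot Top = Top" "boxdot (Iff a b) = Iff (boxdot a) (boxdot b)"
  by (simp_all add: fdefs)

lemma key: "nml L \<Longrightarrow> Imp (boxdot (tg n a)) (Iff (boxdot (tu n a)) a) \<in> L"
proof (induction a)
  case (Var m)
  show ?case by (rule taut_in[OF Var]) (auto simp: tautology_def)
next
  case Bot
  show ?case by (rule taut_in[OF Bot]) (auto simp: tautology_def)
next
  case (Imp a b)
  have "And (Imp (boxdot (tg n a)) (Iff (boxdot (tu n a)) a)) (Imp (boxdot (tg n b)) (Iff (boxdot (tu n b)) b)) \<in> L"
    by (rule and_in[OF Imp.prems Imp.IH(1)[OF Imp.prems] Imp.IH(2)[OF Imp.prems]])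
  moreover have "tautology (Imp (And (Imp (boxdot (tg n a)) (Iff (boxdot (tu n a)) a)) (Imp (boxdot (tg n b)) (Iff (boxdot (tu n b)) b)))
     (Imp (boxdot (tg n (Imp a b))) (Iff (boxdot (tu n (Imp a b))) (Imp a b))))"
    by (auto simp: tautology_def)
  ultimately show ?case using comb1[OF Imp.prems] by blast
next
  case (Box a)
  note L = Box.prems
  define X where "X = boxdot (tu n a)"
  define G where "G = boxdot (tg n a)"
  define q where "q = Var n"
  have IH: "Imp G (Iff X a) \<in> L" using Box.IH[OF Box.prems] unfolding X_def G_def .
  have F1: "Imp (Box G) (Imp (Box X) (Box a)) \<in> L"
    by (rule reg_in[OF L], rule comb1[OF L IH]) (auto simp: tautology_def)
  have F2: "Imp (Box G) (Imp (Box a) (Box X)) \<in> L"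
    by (rule reg_in[OF L], rule comb1[OF L IH]) (auto simp: tautology_def)
  have F3: "Imp (Box X) (Box (Imp (Neg q) X)) \<in> L"
    by (rule mono_in[OF L], rule taut_in[OF L]) (auto simp: tautology_def)
  have F4: "Imp (Box X) (Box (Imp q X)) \<in> L"
    by (rule mono_in[OF L], rule taut_in[OF L]) (auto simp: tautology_def)
  have F5: "Imp (Box (Imp (Neg q) X)) (Imp (Box (Imp q X)) (Box X)) \<in> L"
    by (rule reg_in[OF L], rule taut_in[OF L]) (auto simp: tautology_def)
  have all: "And F1' (And F2' (And F3' (And F4' F5'))) \<in> L"
    if "F1' = Imp (Box G) (Imp (Box X) (Box a))" "F2' = Imp (Box G) (Imp (Box a) (Box X))"
       "F3' = Imp (Box X) (Box (Imp (Neg q) X))" "F4' = Imp (Box X) (Box (Imp q X))"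
       "F5' = Imp (Box (Imp (Neg q) X)) (Imp (Box (Imp q X)) (Box X))" for F1' F2' F3' F4' F5'
    unfolding that by (intro and_in[OF L] F1 F2 F3 F4 F5)
  have T: "tautology (Imp (And (Imp (Box G) (Imp (Box X) (Box a)))
      (And (Imp (Box G) (Imp (Box a) (Box X)))
      (And (Imp (Box X) (Box (Imp (Neg q) X)))
      (And (Imp (Box X) (Box (Imp q X)))
           (Imp (Box (Imp (Neg q) X)) (Imp (Box (Imp q X)) (Box X)))))))
     (Imp (boxdot (tg n (Box a))) (Iff (boxdot (tu n (Box a))) (Box a))))"
    unfolding q_def X_def G_def tautology_def
    apply (intro allI)
    apply (simp only: peval.simps pv boxdot.simps bd_simps tg.simps tu.simps cb_def hyp_def)
    by argo
  show ?case using comb1[OF L all[OF refl refl refl refl refl] T] .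
qed

lemma sat_double_Box:
  "sat (double F) V (w,i) (Box x) = (\<forall>v b. (w,v) \<in> rel F \<longrightarrow> sat (double F) V (v,b) x)"
  by (auto simp: double_def)

lemma sem:
  assumes gf: "gen_frame F" and nv: "n \<notin> vars a"
  shows "\<forall>w\<in>worlds F. \<forall>i. (sat (double F) (\<lambda>m. if m = n then worlds F \<times> {True} else V m \<times> UNIV) (w,i) (tu n a) \<longleftrightarrow> sat F V w a)
     \<and> sat (double F) (\<lambda>m. if m = n then worlds F \<times> {True} else V m \<times> UNIV) (w,i) (tg n a)"
  using nv
proof (induction a)
  case (Var x)
  then show ?case by auto
next
  case Bot
  then show ?case by auto
next
  case (Imp a b)
  then show ?case by auto
next
  case (Box a)
  define V' where "V' = (\<lambda>m. if m = n then worlds F \<times> {True} else V m \<times> (UNIV::bool set))"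
  have R: "rel F \<subseteq> worlds F \<times> worlds F" using gf unfolding gen_frame_def by (elim conjE)
  have IH: "\<forall>v\<in>worlds F. \<forall>j. (sat (double F) V' (v,j) (tu n a) \<longleftrightarrow> sat F V v a) \<and> sat (double F) V' (v,j) (tg n a)"
    using Box.IH Box.prems unfolding V'_def by simp
  have q: "\<And>v j. v \<in> worlds F \<Longrightarrow> sat (double F) V' (v,j) (Var n) = j"
    unfolding V'_def by simp
  show ?case unfolding V'_def[symmetric]
  proof (intro ballI allI)
    fix w i assume w: "w \<in> worlds F"
    let ?P = "\<forall>v. (w,v) \<in> rel F \<longrightarrow> sat F V v a"
    have A: "sat (double F) V' (w,i) (Box (Imp (Neg (Var n)) (tu n a))) = ?P"
    proof -
      have "\<And>v. (w,v) \<in> rel F \<Longrightarrow> v \<in> worlds F" using R by blast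
      then show ?thesis using IH q unfolding sat_double_Box by auto
    qed
    have B: "sat (double F) V' (w,i) (Box (Imp (Var n) (tu n a))) = ?P"
    proof -
      have "\<And>v. (w,v) \<in> rel F \<Longrightarrow> v \<in> worlds F" using R by blast
      then show ?thesis using IH q unfolding sat_double_Box by auto
    qed
    have G: "sat (double F) V' (w,i) (Box (tg n a))"
    proof -
      have "\<And>v. (w,v) \<in> rel F \<Longrightarrow> v \<in> worlds F" using R by blast
      then show ?thesis using IH unfolding sat_double_Box by auto
    qed
    have Sb: "sat F V w (Box a) = ?P" by simp
    show "(sat (double F) V' (w,i) (tu n (Box a)) \<longleftrightarrow> sat F V w (Box a)) \<and> sat (double F) V' (w,i) (tg n (Box a))"
      unfolding tu.simps tg.simps cb_def hyp_def Sb
      using A B G q[OF w] by (simp only: sat.simps sv) argo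
  qed
qed

theorem mainTheorem1:
  fixes L0 :: "fm set" and C :: "'w gframe set"
  assumes "nml L0"
    and "logicT \<subseteq> L0"
    and "\<forall>F\<in>C. gen_frame F"
    and "complete_wrt L0 C"
    and "\<forall>F\<in>C. L_frame L0 (double F)"
  shows "strong_boxdot_property L0"
  unfolding strong_boxdot_property_def
proof (intro allI impI subsetI)
  fix L \<phi>
  assume L: "nml L" and BD: "BD L \<subseteq> L0" and ph: "\<phi> \<in> L"
  show "\<phi> \<in> L0"
  proof (rule ccontr)
    assume "\<phi> \<notin> L0"
    then obtain F where F: "F \<in> C" and nv: "\<not> valid_in F \<phi>"
      using assms(4) unfolding complete_wrt_def by blast
    have gf: "gen_frame F" using F assms(3) by blast
    obtain V w where Vadm: "\<forall>k. V k \<in> adm F" and w: "w \<in> worlds F" and nsat: "\<not> sat F V w \<phi>"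
      using nv unfolding valid_in_def by blast
    obtain n where n: "n \<notin> vars \<phi>"
      using ex_new_if_finite[OF infinite_UNIV_nat finite_vars] by blast
    define \<psi> where "\<psi> = Imp (tg n \<phi>) (tu n \<phi>)"
    have "And \<phi> (Imp (boxdot (tg n \<phi>)) (Iff (boxdot (tu n \<phi>)) \<phi>)) \<in> L"
      using and_in[OF L ph key[OF L]] .
    moreover have "tautology (Imp (And \<phi> (Imp (boxdot (tg n \<phi>)) (Iff (boxdot (tu n \<phi>)) \<phi>))) (boxdot \<psi>))"
      unfolding \<psi>_def tautology_def
      by (intro allI, simp only: peval.simps pv boxdot.simps) argo
    ultimately have "boxdot \<psi> \<in> L" using comb1[OF L] by blast
    then have "\<psi> \<in> L0" using BD unfolding BD_def by blast
    then have val: "valid_in (double F) \<psi>" using assms(5) F unfolding L_frame_def by blast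
    define V' where "V' = (\<lambda>m. if m = n then worlds F \<times> {True} else V m \<times> (UNIV::bool set))"
    have Wadm: "worlds F \<in> adm F" using gf unfolding gen_frame_def by (metis Diff_empty)
    have emp: "{} \<in> adm F" using gf unfolding gen_frame_def by blast
    have "\<forall>m. V' m \<in> adm (double F)"
    proof
      fix m
      show "V' m \<in> adm (double F)"
      proof (cases "m = n")
        case True
        have "V' m = ({} \<times> {False}) \<union> (worlds F \<times> {True})" using True V'_def by simp
        then show ?thesis unfolding double_def using Wadm emp by auto
      next
        case False
        have "V' m = (V m \<times> {False}) \<union> (V m \<times> {True})" using False V'_def by auto
        then show ?thesis unfolding double_def using Vadm by auto
      qed
    qed
    moreover have "(w, True) \<in> worlds (double F)" using w unfolding double_def by simp
    ultimately have "sat (double F) V' (w, True) \<psi>" using val unfolding valid_in_def by blast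
    moreover have "(sat (double F) V' (w,True) (tu n \<phi>) \<longleftrightarrow> sat F V w \<phi>) \<and> sat (double F) V' (w,True) (tg n \<phi>)"
      using sem[OF gf n, of V] w unfolding V'_def by blast
    ultimately show False using nsat unfolding \<psi>_def by simp
  qed
qed

end
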